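(* Let $n\ge 3$ and let $Q$ be the subposet of the face poset of $\Delta_{n+1}$ consisting of all faces of the form $A(F)$, $B(F)$, $C(F,S)$, $D(F,S)$ with $F$ a face of $\Delta_n$ and $S\in F$. Let $M$ be the matching on $Q$ pairing $A(F)$ with $B(F)$ for every face $F$ of $\Delta_n$, and $C(F,S)$ with $D(F,S)$ for every face $F$ of $\Delta_n$ and $S\in F$. Then $M$ is a Morse matching on $Q$.
   Context: The Whitehouse complex $\Delta_n$ ($n\ge 3$) is the simplicial complex with vertex set $V_n=\{S\subseteq\{2,\dots,n\}: 2\le |S|\le n-2\}$, in which a subset $F\subseteq V_n$ is a face iff for all $S,T\in F$ one has $S\subseteq T$, $T\subseteq S$, or $S\cap T=\emptyset$. (So $\Delta_3=\{\emptyset\}$.) Its face poset is the set of faces (including $\emptyset$) ordered by inclusion, ranked by cardinality. For a face $F$ of $\Delta_n$: $A(F)=F$; $B(F)=F\cup\{\{2,\dots,n\}\}$; for $S\in F$, $C(F,S)=\{T\cup\{n+1\}: T\in F, S\subseteq T\}\cup\{T: T\in F, S\not\subseteq T\}$ and $D(F,S)=C(F,S)\cup\{S\}$. These are faces of $\Delta_{n+1}$. A matching $M$ on a ranked poset is a set of disjoint cover pairs $x\lessdot y$; orienting all cover edges downward except those in $M$, which are oriented upward, $M$ is a Morse matching if the resulting directed graph is acyclic. *)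

theory Defs
  imports Main
begin

definition wh_vertices :: "nat \<Rightarrow> nat set set" where
  "wh_vertices n = {S. S \<subseteq> {2..n} \<and> 2 \<le> card S \<and> card S \<le> n - 2}"

(* F is a face of Delta_n (the empty face included) *)
definition wh_face :: "nat \<Rightarrow> nat set set \<Rightarrow> bool" where
  "wh_face n F \<longleftrightarrow> F \<subseteq> wh_vertices n \<and>
     (\<forall>S\<in>F. \<forall>T\<in>F. S \<subseteq> T \<or> T \<subseteq> S \<or> S \<inter> T = {})"

definition wh_A :: "nat set set \<Rightarrow> nat set set" where
  "wh_A F = F"

definition wh_B :: "nat \<Rightarrow> nat set set \<Rightarrow> nat set set" where
  "wh_B n F = insert {2..n} F"

definition wh_C :: "nat \<Rightarrow> nat set set \<Rightarrow> nat set \<Rightarrow> nat set set" where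
  "wh_C n F S = {insert (n+1) T | T. T \<in> F \<and> S \<subseteq> T} \<union> {T. T \<in> F \<and> \<not> S \<subseteq> T}"

definition wh_D :: "nat \<Rightarrow> nat set set \<Rightarrow> nat set \<Rightarrow> nat set set" where
  "wh_D n F S = insert S (wh_C n F S)"

definition wh_Q :: "nat \<Rightarrow> nat set set set" where
  "wh_Q n = {wh_A F | F. wh_face n F} \<union> {wh_B n F | F. wh_face n F}
          \<union> {wh_C n F S | F S. wh_face n F \<and> S \<in> F}
          \<union> {wh_D n F S | F S. wh_face n F \<and> S \<in> F}"

definition wh_M :: "nat \<Rightarrow> (nat set set \<times> nat set set) set" where
  "wh_M n = {(wh_A F, wh_B n F) | F. wh_face n F}
          \<union> {(wh_C n F S, wh_D n F S) | F S. wh_face n F \<and> S \<in> F}"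

definition covers_in :: "'a set set \<Rightarrow> 'a set \<Rightarrow> 'a set \<Rightarrow> bool" where
  "covers_in P x y \<longleftrightarrow> x \<in> P \<and> y \<in> P \<and> x \<subset> y \<and> \<not> (\<exists>z\<in>P. x \<subset> z \<and> z \<subset> y)"

definition is_matching :: "'a set set \<Rightarrow> ('a set \<times> 'a set) set \<Rightarrow> bool" where
  "is_matching P M \<longleftrightarrow> (\<forall>(x,y)\<in>M. covers_in P x y) \<and>
     (\<forall>(x,y)\<in>M. \<forall>(x',y')\<in>M. (x,y) \<noteq> (x',y') \<longrightarrow> {x,y} \<inter> {x',y'} = {})"

(* Hasse diagram with cover edges oriented downward, except matched ones upward *)
definition morse_digraph :: "'a set set \<Rightarrow> ('a set \<times> 'a set) set \<Rightarrow> ('a set \<times> 'a set) set" where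
  "morse_digraph P M = {(y,x). covers_in P x y \<and> (x,y) \<notin> M} \<union> {(x,y). covers_in P x y \<and> (x,y) \<in> M}"

definition morse_matching :: "'a set set \<Rightarrow> ('a set \<times> 'a set) set \<Rightarrow> bool" where
  "morse_matching P M \<longleftrightarrow> is_matching P M \<and> acyclic (morse_digraph P M)"

end

theory Submission imports Defs "HOL-Library.Product_Lexorder" begin

definition istop :: "nat \<Rightarrow> nat set set \<Rightarrow> bool" where
  "istop n X \<longleftrightarrow> {2..n} \<in> X \<or> (\<exists>Y\<in>X. n+1 \<notin> Y \<and> insert (n+1) Y \<in> X)"
definition hasn :: "nat \<Rightarrow> nat set set \<Rightarrow> bool" where
  "hasn n X \<longleftrightarrow> (\<exists>Y\<in>X. n+1 \<in> Y)"
definition core :: "nat \<Rightarrow> nat set set \<Rightarrow> nat set" where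
  "core n X = \<Inter>{Y\<in>X. n+1 \<in> Y}"
definition pot :: "nat \<Rightarrow> nat set set \<Rightarrow> int \<times> int \<times> int \<times> int" where
  "pot n X = (2 * int (card X) + (if istop n X then -1 else 1),
              (if hasn n X then 1 else 0), - int (card (core n X)), - int (card X))"

lemma face_mem:
  assumes "n \<ge> 3" "wh_face n F" "T \<in> F"
  shows "n+1 \<notin> T" "T \<noteq> {2..n}" "finite T" "T \<subseteq> {2..n}"
proof -
  have T: "T \<subseteq> {2..n}" "card T \<le> n - 2" using assms unfolding wh_face_def wh_vertices_def by auto
  then show "n+1 \<notin> T" "finite T" "T \<subseteq> {2..n}" by (auto intro: finite_subset)
  show "T \<noteq> {2..n}" using T assms(1) by auto
qed

lemma face_finite: "wh_face n F \<Longrightarrow> finite F"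
  unfolding wh_face_def wh_vertices_def
  by (rule finite_subset[of _ "Pow {2..n}"]) auto

lemma C_finite: "wh_face n F \<Longrightarrow> finite (wh_C n F S)"
  using face_finite[of n F] unfolding wh_C_def by auto

lemma C_props:
  assumes "n \<ge> 3" "wh_face n F" "S \<in> F"
  shows "S \<notin> wh_C n F S" "insert (n+1) S \<in> wh_C n F S"
    "core n (wh_C n F S) = insert (n+1) S" "core n (wh_D n F S) = insert (n+1) S"
    "hasn n (wh_C n F S)" "hasn n (wh_D n F S)"
    "\<not> istop n (wh_C n F S)" "istop n (wh_D n F S)"
proof -
  note m = face_mem[OF assms(1,2)]
  show "S \<notin> wh_C n F S" unfolding wh_C_def using m(1)[OF assms(3)] by auto
  show i: "insert (n+1) S \<in> wh_C n F S" unfolding wh_C_def using assms(3) by auto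
  have sub: "\<And>Y. Y \<in> wh_C n F S \<Longrightarrow> n+1 \<in> Y \<Longrightarrow> insert (n+1) S \<subseteq> Y"
    unfolding wh_C_def using m(1) by auto
  show c: "core n (wh_C n F S) = insert (n+1) S"
    unfolding core_def using i sub by blast
  show "core n (wh_D n F S) = insert (n+1) S"
    unfolding core_def wh_D_def using i sub m(1)[OF assms(3)] by blast
  show "hasn n (wh_C n F S)" "hasn n (wh_D n F S)" using i unfolding hasn_def wh_D_def by auto
  show "istop n (wh_D n F S)" unfolding istop_def wh_D_def using i m(1)[OF assms(3)] by auto
  show "\<not> istop n (wh_C n F S)"
  proof
    assume "istop n (wh_C n F S)"
    then consider "{2..n} \<in> wh_C n F S" | Y where "Y \<in> wh_C n F S" "n+1 \<notin> Y" "insert (n+1) Y \<in> wh_C n F S"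
      unfolding istop_def by blast
    then show False
    proof cases
      case 1 then show ?thesis unfolding wh_C_def using m(2) by (auto dest: equalityD2)
    next
      case 2
      then have Y: "Y \<in> F" "\<not> S \<subseteq> Y" unfolding wh_C_def by auto
      from 2(3) obtain T where "T \<in> F" "S \<subseteq> T" "insert (n+1) Y = insert (n+1) T"
        unfolding wh_C_def using m(1) by auto
      then have "Y = T" using m(1) Y(1) 2(2)
        by (metis insert_ident)
      then show False using Y \<open>S \<subseteq> T\<close> by simp
    qed
  qed
qed

lemma AB_props:
  assumes "n \<ge> 3" "wh_face n F"
  shows "{2..n} \<notin> F" "\<not> hasn n F" "\<not> hasn n (wh_B n F)" "\<not> istop n F" "istop n (wh_B n F)"
    "core n (wh_B n F) = core n F"
proof -
  note m = face_mem[OF assms(1,2)]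
  show "{2..n} \<notin> F" using m(2) by blast
  show "\<not> hasn n F" "\<not> hasn n (wh_B n F)" unfolding hasn_def wh_B_def using m(1) by auto
  show "\<not> istop n F" unfolding istop_def using m(1,2) by blast
  show "istop n (wh_B n F)" unfolding istop_def wh_B_def by auto
  show "core n (wh_B n F) = core n F" unfolding core_def wh_B_def by auto
qed

lemma Q_cases:
  assumes "X \<in> wh_Q n"
  obtains F where "wh_face n F" "X = F"
  | F where "wh_face n F" "X = wh_B n F"
  | F S where "wh_face n F" "S \<in> F" "X = wh_C n F S"
  | F S where "wh_face n F" "S \<in> F" "X = wh_D n F S"
  using assms unfolding wh_Q_def wh_A_def by blast

lemma M_cases:
  assumes "p \<in> wh_M n"
  obtains F where "wh_face n F" "p = (F, wh_B n F)"
  | F S where "wh_face n F" "S \<in> F" "p = (wh_C n F S, wh_D n F S)"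
  using assms unfolding wh_M_def wh_A_def by blast

lemma Q_finite: "X \<in> wh_Q n \<Longrightarrow> finite X"
  by (erule Q_cases) (auto simp: face_finite C_finite wh_B_def wh_D_def)

lemma M_props0:
  assumes "n \<ge> 3" "(x,y) \<in> wh_M n"
  shows "(\<exists>Z. Z \<notin> x \<and> y = insert Z x \<and> n+1 \<notin> Z) \<and> x \<in> wh_Q n \<and> y \<in> wh_Q n \<and>
    \<not> istop n x \<and> istop n y \<and> hasn n y = hasn n x \<and> core n y = core n x \<and> finite x"
  using assms(2)
proof (cases rule: M_cases)
  case (1 F)
  note AB = AB_props[OF assms(1) 1(1)]
  have "x \<in> wh_Q n" "y \<in> wh_Q n" using 1 unfolding wh_Q_def wh_A_def by blast+
  then show ?thesis using 1 AB face_finite[OF 1(1)] unfolding wh_B_def by auto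
next
  case (2 F S)
  note C = C_props[OF assms(1) 2(1,2)]
  have "x \<in> wh_Q n" "y \<in> wh_Q n" using 2 unfolding wh_Q_def wh_A_def by blast+
  moreover have "\<exists>Z. Z \<notin> x \<and> y = insert Z x \<and> n+1 \<notin> Z"
    using 2 C face_mem[OF assms(1) 2(1,2)] unfolding wh_D_def by auto
  ultimately show ?thesis using 2 C C_finite[OF 2(1)] by auto
qed

lemmas M_props = M_props0[THEN conjunct1] M_props0[THEN conjunct2, THEN conjunct1]
  M_props0[THEN conjunct2, THEN conjunct2, THEN conjunct1]
  M_props0[THEN conjunct2, THEN conjunct2, THEN conjunct2, THEN conjunct1]
  M_props0[THEN conjunct2, THEN conjunct2, THEN conjunct2, THEN conjunct2, THEN conjunct1]
  M_props0[THEN conjunct2, THEN conjunct2, THEN conjunct2, THEN conjunct2, THEN conjunct2, THEN conjunct1]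
  M_props0[THEN conjunct2, THEN conjunct2, THEN conjunct2, THEN conjunct2, THEN conjunct2, THEN conjunct2, THEN conjunct1]
  M_props0[THEN conjunct2, THEN conjunct2, THEN conjunct2, THEN conjunct2, THEN conjunct2, THEN conjunct2, THEN conjunct2]

lemma M_bot_inj:
  assumes "n \<ge> 3" "(x,y) \<in> wh_M n" "(x,y') \<in> wh_M n"
  shows "y = y'"
  using assms(2)
proof (cases rule: M_cases)
  case (1 F)
  from assms(3) show ?thesis
  proof (cases rule: M_cases)
    case (1 F') then show ?thesis using \<open>(x,y) = (F, wh_B n F)\<close> by simp
  next
    case (2 F' S')
    then show ?thesis using 1 AB_props[OF assms(1) 1(1)] C_props[OF assms(1) 2(1,2)] by simp
  qed
next
  case (2 F S)
  from assms(3) show ?thesis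
  proof (cases rule: M_cases)
    case (1 F') then show ?thesis using 2 AB_props[OF assms(1) 1(1)] C_props[OF assms(1) 2(1,2)] by simp
  next
    case (2 F' S')
    note c1 = C_props[OF assms(1) \<open>wh_face n F\<close> \<open>S \<in> F\<close>]
    note c2 = C_props[OF assms(1) 2(1,2)]
    have "insert (n+1) S = insert (n+1) S'" using c1(3) c2(3) 2 \<open>(x,y) = _\<close> by simp
    then have "S = S'" using face_mem(1)[OF assms(1) \<open>wh_face n F\<close> \<open>S \<in> F\<close>] face_mem(1)[OF assms(1) 2(1,2)]
      by (metis insert_ident)
    then show ?thesis using 2 \<open>(x,y) = _\<close> unfolding wh_D_def by auto
  qed
qed

lemma M_top_inj:
  assumes "n \<ge> 3" "(x,y) \<in> wh_M n" "(x',y) \<in> wh_M n"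
  shows "x = x'"
  using assms(2)
proof (cases rule: M_cases)
  case (1 F)
  from assms(3) show ?thesis
  proof (cases rule: M_cases)
    case (1 F')
    have "F = wh_B n F - {{2..n}}" "F' = wh_B n F' - {{2..n}}"
      using AB_props(1)[OF assms(1) \<open>wh_face n F\<close>] AB_props(1)[OF assms(1) 1(1)] unfolding wh_B_def by auto
    then show ?thesis using 1 \<open>(x,y) = (F, wh_B n F)\<close> by simp
  next
    case (2 F' S')
    then show ?thesis using 1 AB_props[OF assms(1) 1(1)] C_props[OF assms(1) 2(1,2)] by simp
  qed
next
  case (2 F S)
  from assms(3) show ?thesis
  proof (cases rule: M_cases)
    case (1 F') then show ?thesis using 2 AB_props[OF assms(1) 1(1)] C_props[OF assms(1) 2(1,2)] by simp
  next
    case (2 F' S')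
    note c1 = C_props[OF assms(1) \<open>wh_face n F\<close> \<open>S \<in> F\<close>]
    note c2 = C_props[OF assms(1) 2(1,2)]
    have "insert (n+1) S = insert (n+1) S'" using c1(4) c2(4) 2 \<open>(x,y) = _\<close> by simp
    then have "S = S'" using face_mem(1)[OF assms(1) \<open>wh_face n F\<close> \<open>S \<in> F\<close>] face_mem(1)[OF assms(1) 2(1,2)]
      by (metis insert_ident)
    have "wh_C n F S = wh_D n F S - {S}" "wh_C n F' S' = wh_D n F' S' - {S'}"
      using c1(1) c2(1) unfolding wh_D_def by auto
    then show ?thesis using 2 \<open>(x,y) = _\<close> \<open>S = S'\<close> by simp
  qed
qed

lemma covers_insert:
  assumes "x \<in> P" "y \<in> P" "y = insert Z x" "Z \<notin> x"
  shows "covers_in P x y"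
  unfolding covers_in_def using assms by auto

lemma M_disj:
  assumes "n \<ge> 3" and xy: "(x,y) \<in> wh_M n" and xy': "(x',y') \<in> wh_M n" and ne: "(x, y) \<noteq> (x', y')"
  shows "{x, y} \<inter> {x', y'} = {}"
proof -
  note p = M_props[OF assms(1) xy] and p' = M_props[OF assms(1) xy']
  have "x \<noteq> x'" using M_bot_inj[OF assms(1) xy] xy' ne by auto
  moreover have "y \<noteq> y'" using M_top_inj[OF assms(1) xy] xy' ne by auto
  moreover have "x \<noteq> y'" "y \<noteq> x'" using p(4,5) p'(4,5) by auto
  ultimately show "{x, y} \<inter> {x', y'} = {}" by auto
qed

lemma M_covers:
  assumes "n \<ge> 3" and xy: "(x,y) \<in> wh_M n"
  shows "covers_in (wh_Q n) x y"
  using M_props(1-3)[OF assms] covers_insert by metis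

lemma is_matching_M:
  assumes "n \<ge> 3"
  shows "is_matching (wh_Q n) (wh_M n)"
  unfolding is_matching_def using M_disj[OF assms] M_covers[OF assms] by fast

lemma up_edge:
  assumes "n \<ge> 3" and xy: "(x,y) \<in> wh_M n"
  shows "pot n y < pot n x"
proof -
  note p = M_props[OF assms]
  obtain Z where Z: "Z \<notin> x" "y = insert Z x" using p(1) by blast
  have c: "card y = card x + 1" using Z p(8) by simp
  show ?thesis unfolding pot_def using c p(4-7) by (simp add: less_prod_def)
qed

lemma down_edge:
  assumes n3: "n \<ge> 3" and cov: "covers_in (wh_Q n) x y" and nm: "(x,y) \<notin> wh_M n"
  shows "pot n x < pot n y"
proof -
  from cov have xQ: "x \<in> wh_Q n" and yQ: "y \<in> wh_Q n" and sub: "x \<subset> y"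
    unfolding covers_in_def by auto
  have fy: "finite y" using Q_finite[OF yQ] .
  have fx: "finite x" using fy sub finite_subset by blast
  have lt: "card x < card y" using psubset_card_mono[OF fy sub] .
  show ?thesis
  proof (cases "card x + 1 < card y")
    case True
    then show ?thesis unfolding pot_def by (simp add: less_prod_def)
  next
    case False
    then have c: "card y = card x + 1" using lt by simp
    obtain Z where Z: "Z \<in> y" "Z \<notin> x" using sub by blast
    have yZ: "y = insert Z x"
    proof (rule ccontr)
      assume "y \<noteq> insert Z x"
      then have "insert Z x \<subset> y" using Z sub by blast
      then have "card (insert Z x) < card y" using psubset_card_mono[OF fy] by blast
      then show False using c Z fx by simp
    qed
    show ?thesis
    proof (cases "istop n x \<or> \<not> istop n y")
      case True
      then show ?thesis unfolding pot_def using c by (auto simp add: less_prod_def)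
    next
      case False
      then have tx: "\<not> istop n x" and ty: "istop n y" by auto
      have hmono: "hasn n x \<Longrightarrow> hasn n y" using sub unfolding hasn_def by blast
      show ?thesis
      proof (cases "hasn n x = hasn n y")
        case False
        then show ?thesis unfolding pot_def using c tx ty hmono by (auto simp add: less_prod_def)
      next
        case heq: True
        show ?thesis
        proof (cases "hasn n y")
          case False
          then have hx: "\<not> hasn n x" using heq by simp
          obtain F where F: "wh_face n F" "y = wh_B n F"
            using yQ ty False
            by (cases rule: Q_cases) (auto simp: AB_props[OF n3] C_props[OF n3])
          obtain F' where F': "wh_face n F'" "x = F'"
            using xQ tx hx
            by (cases rule: Q_cases) (auto simp: AB_props[OF n3] C_props[OF n3])
          have "Z = {2..n}"
          proof (rule ccontr)
            assume "Z \<noteq> {2..n}"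
            then have "{2..n} \<in> x" using yZ F(2) unfolding wh_B_def by blast
            then show False using AB_props(1)[OF n3 F'(1)] F'(2) by simp
          qed
          then have "insert {2..n} x = insert {2..n} F" using yZ F(2) unfolding wh_B_def by simp
          then have "x = F" using Z(2) \<open>Z = {2..n}\<close> AB_props(1)[OF n3 F(1)] by (metis insert_ident)
          then have "(x,y) \<in> wh_M n" using F unfolding wh_M_def wh_A_def by blast
          then show ?thesis using nm by simp
        next
          case True
          then have hx: "hasn n x" using heq by simp
          obtain F S where F: "wh_face n F" "S \<in> F" "y = wh_D n F S"
            using yQ ty True
            by (cases rule: Q_cases) (auto simp: AB_props[OF n3] C_props[OF n3])
          obtain F' S' where F': "wh_face n F'" "S' \<in> F'" "x = wh_C n F' S'"
            using xQ tx hx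
            by (cases rule: Q_cases) (auto simp: AB_props[OF n3] C_props[OF n3])
          note c1 = C_props[OF n3 F(1,2)] and c2 = C_props[OF n3 F'(1,2)]
          have Sn: "n+1 \<notin> S" using face_mem(1)[OF n3 F(1,2)] .
          have "Z \<noteq> S"
          proof
            assume "Z = S"
            then have "insert S x = insert S (wh_C n F S)" using yZ F(3) unfolding wh_D_def by simp
            then have "x = wh_C n F S" using Z(2) \<open>Z = S\<close> c1(1) by (metis insert_ident)
            then have "(x,y) \<in> wh_M n" using F unfolding wh_M_def by blast
            then show False using nm by simp
          qed
          have Zc: "Z = insert (n+1) S"
          proof (rule ccontr)
            assume "Z \<noteq> insert (n+1) S"
            then have "S \<in> x" "insert (n+1) S \<in> x" using \<open>Z \<noteq> S\<close> yZ F(3) c1(2) unfolding wh_D_def by auto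
            then have "istop n x" unfolding istop_def using Sn by blast
            then show False using tx by simp
          qed
          have cy: "core n y = Z" using c1(4) F(3) Zc by simp
          have cx: "core n x \<in> x" using c2(2,3) F'(3) by simp
          have "core n y \<subseteq> core n x"
            unfolding core_def by (rule Inter_anti_mono) (use sub in blast)
          moreover have "core n x \<noteq> core n y" using cx cy Z(2) by auto
          moreover have "finite (core n x)"
            using c2(3) F'(3) face_mem(3)[OF n3 F'(1,2)] by simp
          ultimately have "card (core n y) < card (core n x)"
            by (simp add: psubset_card_mono psubset_eq)
          then show ?thesis unfolding pot_def using c tx ty heq by (simp add: less_prod_def)
        qed
      qed
    qed
  qed
qed

theorem mainTheorem10:
  fixes n :: nat
  assumes "n \<ge> 3"
  shows "morse_matching (wh_Q n) (wh_M n)"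
proof -
  define r where "r = {(u, v). pot n v < pot n u}"
  have tr: "trans r" unfolding r_def trans_def by auto
  have ac: "acyclic r" unfolding acyclic_def using trancl_id[OF tr] unfolding r_def by auto
  have "morse_digraph (wh_Q n) (wh_M n) \<subseteq> r"
    unfolding morse_digraph_def r_def using down_edge[OF assms] up_edge[OF assms] by auto
  then have "acyclic (morse_digraph (wh_Q n) (wh_M n))" using acyclic_subset ac by blast
  then show ?thesis unfolding morse_matching_def using is_matching_M[OF assms] by simp
qed

end
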